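(* Let $\Omega$ be either $\mathbb R^n$ or a cube in $\mathbb R^n$. A measurable function $f$ on $\Omega$ belongs to $\mathcal M_{A_1}(\Omega)$ if and only if $M_\Omega f\in\mathcal M_{A_1}(\Omega)$.
   Context: Cubes have sides parallel to the axes. A weight on a cube $Q$ is an a.e. positive function in $L^1(Q)$; a weight on $\mathbb R^n$ is an a.e. positive function in $L^1_{\mathrm{loc}}(\mathbb R^n)$. $M_\Omega f(x)=\sup\{|Q'|^{-1}\int_{Q'}|f|: Q'\subset\Omega \text{ a cube}, x\in Q'\}$. $A_1(\Omega)$ is the class of weights $w$ on $\Omega$ with $M_\Omega w\le Cw$ a.e. on $\Omega$ for some constant $C$. $\mathcal M_{A_1}(\Omega)$ is the set of measurable $g$ on $\Omega$ for which there exists $w\in A_1(\Omega)$ with $|g|\le w$ a.e. on $\Omega$. *)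

theory Defs
  imports "HOL-Analysis.Analysis"
begin

definition is_cube :: "'a::euclidean_space set \<Rightarrow> bool" where
  "is_cube Q \<longleftrightarrow> (\<exists>a s. s > 0 \<and> Q = cbox a (a + s *\<^sub>R One))"

definition maxfun :: "'a::euclidean_space set \<Rightarrow> ('a \<Rightarrow> real) \<Rightarrow> 'a \<Rightarrow> ennreal" where
  "maxfun \<Omega> f x = (SUP Q \<in> {Q. is_cube Q \<and> Q \<subseteq> \<Omega> \<and> x \<in> Q}.
      (\<integral>\<^sup>+ y. indicator Q y * ennreal \<bar>f y\<bar> \<partial>lebesgue) / emeasure lebesgue Q)"

text \<open>Weight on \<Omega>: measurable, a.e. positive on \<Omega>, integrable on every compact subset of \<Omega>
  (for a closed cube \<Omega> this is L^1(\<Omega>), for \<Omega> = UNIV it is L^1_loc).\<close>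
definition weight_on :: "'a::euclidean_space set \<Rightarrow> ('a \<Rightarrow> real) \<Rightarrow> bool" where
  "weight_on \<Omega> w \<longleftrightarrow> w \<in> borel_measurable (lebesgue_on \<Omega>)
     \<and> (AE x in lebesgue. x \<in> \<Omega> \<longrightarrow> w x > 0)
     \<and> (\<forall>K. compact K \<and> K \<subseteq> \<Omega> \<longrightarrow> set_integrable lebesgue K w)"

definition A1 :: "'a::euclidean_space set \<Rightarrow> ('a \<Rightarrow> real) \<Rightarrow> bool" where
  "A1 \<Omega> w \<longleftrightarrow> weight_on \<Omega> w \<and>
     (\<exists>C::real. AE x in lebesgue. x \<in> \<Omega> \<longrightarrow> maxfun \<Omega> w x \<le> ennreal (C * w x))"

definition M_A1 :: "'a::euclidean_space set \<Rightarrow> ('a \<Rightarrow> real) \<Rightarrow> bool" where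
  "M_A1 \<Omega> g \<longleftrightarrow> g \<in> borel_measurable (lebesgue_on \<Omega>) \<and>
     (\<exists>w. A1 \<Omega> w \<and> (AE x in lebesgue. x \<in> \<Omega> \<longrightarrow> \<bar>g x\<bar> \<le> w x))"

text \<open>The same class for [0,\<infinity>]-valued functions (such as maximal functions).\<close>
definition M_A1_enn :: "'a::euclidean_space set \<Rightarrow> ('a \<Rightarrow> ennreal) \<Rightarrow> bool" where
  "M_A1_enn \<Omega> g \<longleftrightarrow> g \<in> borel_measurable (lebesgue_on \<Omega>) \<and>
     (\<exists>w. A1 \<Omega> w \<and> (AE x in lebesgue. x \<in> \<Omega> \<longrightarrow> g x \<le> ennreal (w x)))"

end

theory Submission
  imports Defs
begin

lemma cube_emeasure:
  fixes c :: "'a::euclidean_space"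
  assumes "r \<ge> 0"
  shows "emeasure lebesgue (cbox c (c + r *\<^sub>R One)) = ennreal (r ^ DIM('a))"
proof -
  have "emeasure lebesgue (cbox c (c + r *\<^sub>R One)) = emeasure lborel (cbox c (c + r *\<^sub>R One))"
    by (simp add: emeasure_completion)
  also have "\<dots> = ennreal (\<Prod>b\<in>(Basis::'a set). r)"
    using assms by (simp add: emeasure_lborel_cbox_eq inner_simps)
  also have "\<dots> = ennreal (r ^ DIM('a))" by simp
  finally show ?thesis .
qed

lemma choose_lambda:
  fixes I \<tau> :: ennreal and t s :: real and n :: nat
  assumes "0 < t" "t \<le> s" "\<tau> < I / ennreal (t ^ n)"
  shows "\<exists>l. 0 < l \<and> l \<le> 1 \<and> \<tau> < I / ennreal (((1 - l) * t + l * s) ^ n)"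
proof (cases "I = top")
  case True
  have "0 < s ^ n" using assms by simp
  then have "I / ennreal (((1 - 1) * t + 1 * s) ^ n) = top" using True
    by (simp add: ennreal_divide_top divide_ennreal_def)
  moreover have "\<tau> \<noteq> top" using assms(3) by auto
  ultimately show ?thesis by (intro exI[of _ 1]) (auto simp: top.not_eq_extremum)
next
  case False
  then obtain i where I: "I = ennreal i" "0 \<le> i" by (cases I) auto
  have tn: "0 < t ^ n" using assms by simp
  have "\<tau> < ennreal (i / t ^ n)" using assms(3) I tn by (simp add: divide_ennreal)
  then obtain r where r: "\<tau> = ennreal r" "0 \<le> r" "r < i / t ^ n"
    by (cases \<tau>) (auto simp: ennreal_less_iff)
  have "r * t ^ n < i" using r tn by (simp add: pos_less_divide_eq)
  have lim: "((\<lambda>l. r * ((1 - l) * t + l * s) ^ n) \<longlongrightarrow> r * ((1 - 0) * t + 0 * s) ^ n) (at_right 0)"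
    by (intro tendsto_intros)
  have "eventually (\<lambda>l. r * ((1 - l) * t + l * s) ^ n < i) (at_right (0::real))"
    using order_tendstoD(2)[OF lim] \<open>r * t ^ n < i\<close> by simp
  then obtain b where b: "b > 0" "\<And>y. y > 0 \<Longrightarrow> y < b \<Longrightarrow> r * ((1 - y) * t + y * s) ^ n < i"
    unfolding eventually_at_right_field by auto
  define l where "l = min 1 (b/2)"
  have l: "0 < l" "l \<le> 1" "l < b" using b unfolding l_def by auto
  have pos: "0 < (1 - l) * t + l * s"
  proof -
    have "(1 - l) * t + l * s \<ge> (1-l) * t + l * t" using l assms by (intro add_left_mono mult_left_mono) auto
    then show ?thesis using assms by (simp add: algebra_simps)
  qed
  then have pn: "0 < ((1 - l) * t + l * s) ^ n" by simp
  have "r < i / ((1 - l) * t + l * s) ^ n" using b(2)[OF l(1) l(3)] pn by (simp add: pos_less_divide_eq)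
  then have "\<tau> < ennreal (i / ((1 - l) * t + l * s) ^ n)" using r by (simp add: ennreal_less_iff)
  also have "\<dots> = I / ennreal (((1 - l) * t + l * s) ^ n)" using I pn by (simp add: divide_ennreal)
  finally show ?thesis using l by blast
qed

lemma enlarge:
  fixes a b x :: "'a::euclidean_space" and g :: "'a \<Rightarrow> real" and \<tau> :: ennreal
  assumes t: "0 < t" and s: "0 < s"
    and sub: "cbox b (b + t *\<^sub>R One) \<subseteq> cbox a (a + s *\<^sub>R One)"
    and x: "x \<in> cbox b (b + t *\<^sub>R One)"
    and tau: "\<tau> < (\<integral>\<^sup>+ y. indicator (cbox b (b + t *\<^sub>R One)) y * ennreal \<bar>g y\<bar> \<partial>lebesgue)
                 / emeasure lebesgue (cbox b (b + t *\<^sub>R One))"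
  shows "\<exists>Q'. is_cube Q' \<and> Q' \<subseteq> cbox a (a + s *\<^sub>R One) \<and>
     \<tau> < (\<integral>\<^sup>+ y. indicator Q' y * ennreal \<bar>g y\<bar> \<partial>lebesgue) / emeasure lebesgue Q' \<and>
     (\<exists>V. open V \<and> x \<in> V \<and> V \<inter> cbox a (a + s *\<^sub>R One) \<subseteq> Q')"
proof -
  define Q where "Q = cbox b (b + t *\<^sub>R One)"
  define I where "I = (\<integral>\<^sup>+ y. indicator Q y * ennreal \<bar>g y\<bar> \<partial>lebesgue)"
  have comp: "\<And>i. i \<in> Basis \<Longrightarrow> a \<bullet> i \<le> b \<bullet> i \<and> b \<bullet> i + t \<le> a \<bullet> i + s"
    using sub t by (auto simp: subset_box inner_simps)
  obtain i0 :: 'a where i0: "i0 \<in> Basis" using nonempty_Basis by blast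
  have ts: "t \<le> s" using comp[OF i0] by simp
  have em: "emeasure lebesgue (cbox b (b + t *\<^sub>R One)) = ennreal (t ^ DIM('a))"
    by (rule cube_emeasure) (use t in linarith)
  have "\<tau> < I / ennreal (t ^ DIM('a))" using tau unfolding I_def Q_def em .
  then obtain l where l: "0 < l" "l \<le> 1" and lt: "\<tau> < I / ennreal (((1 - l) * t + l * s) ^ DIM('a))"
    using choose_lambda[OF t ts] by blast
  define r where "r = (1 - l) * t + l * s"
  define c where "c = (1 - l) *\<^sub>R b + l *\<^sub>R a"
  define Q' where "Q' = cbox c (c + r *\<^sub>R One)"
  have rpos: "0 < r"
  proof -
    have "(1 - l) * t + l * s \<ge> (1-l) * t + l * t" using l ts by (intro add_left_mono mult_left_mono) auto
    then show ?thesis using t unfolding r_def by (simp add: algebra_simps)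
  qed
  have cc: "c \<bullet> i = (1 - l) * (b \<bullet> i) + l * (a \<bullet> i)" "(c + r *\<^sub>R One) \<bullet> i = (1 - l) * (b \<bullet> i + t) + l * (a \<bullet> i + s)"
    if "i \<in> Basis" for i
    using that unfolding c_def r_def by (auto simp: inner_simps algebra_simps)
  have ineqs: "a \<bullet> i \<le> c \<bullet> i" "c \<bullet> i \<le> b \<bullet> i" "b \<bullet> i + t \<le> (c + r *\<^sub>R One) \<bullet> i"
      "(c + r *\<^sub>R One) \<bullet> i \<le> a \<bullet> i + s"
    if i: "i \<in> Basis" for i
  proof -
    have A: "l * (a \<bullet> i) \<le> l * (b \<bullet> i)" "(1-l) * (a \<bullet> i) \<le> (1-l) * (b \<bullet> i)"
      "l * (b \<bullet> i + t) \<le> l * (a \<bullet> i + s)" "(1-l) * (b \<bullet> i + t) \<le> (1-l) * (a \<bullet> i + s)"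
      using comp[OF i] l by (auto intro!: mult_left_mono)
    show "a \<bullet> i \<le> c \<bullet> i" "c \<bullet> i \<le> b \<bullet> i" "b \<bullet> i + t \<le> (c + r *\<^sub>R One) \<bullet> i"
      "(c + r *\<^sub>R One) \<bullet> i \<le> a \<bullet> i + s"
      using A cc[OF i] by (auto simp: algebra_simps)
  qed
  have cube: "is_cube Q'" unfolding Q'_def is_cube_def using rpos by blast
  have QQ': "Q \<subseteq> Q'" unfolding Q_def Q'_def using ineqs t
    by (auto simp: subset_box inner_simps)
  have Q'P: "Q' \<subseteq> cbox a (a + s *\<^sub>R One)" unfolding Q'_def using ineqs rpos
    by (auto simp: subset_box inner_simps)
  have "I \<le> (\<integral>\<^sup>+ y. indicator Q' y * ennreal \<bar>g y\<bar> \<partial>lebesgue)"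
    unfolding I_def using QQ' by (intro nn_integral_mono) (auto simp: indicator_def)
  then have "I / ennreal (r ^ DIM('a)) \<le> (\<integral>\<^sup>+ y. indicator Q' y * ennreal \<bar>g y\<bar> \<partial>lebesgue) / emeasure lebesgue Q'"
    unfolding Q'_def using cube_emeasure[of r c] rpos by (simp only: divide_right_mono_ennreal less_imp_le)
  with lt have avg: "\<tau> < (\<integral>\<^sup>+ y. indicator Q' y * ennreal \<bar>g y\<bar> \<partial>lebesgue) / emeasure lebesgue Q'"
    unfolding r_def by order
  define L where "L i = (if a \<bullet> i < b \<bullet> i then c \<bullet> i else b \<bullet> i - 1)" for i
  define U where "U i = (if b \<bullet> i + t < a \<bullet> i + s then (c + r *\<^sub>R One) \<bullet> i else b \<bullet> i + t + 1)" for i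
  define V where "V = (\<Inter>i\<in>Basis. {y. L i < y \<bullet> i} \<inter> {y. y \<bullet> i < U i})"
  have "open V" unfolding V_def
    by (intro open_INT finite_Basis ballI open_Int open_halfspace_component_gt open_halfspace_component_lt)
  moreover have "x \<in> V"
  proof -
    { fix i :: 'a assume i: "i \<in> Basis"
      have xi: "b \<bullet> i \<le> x \<bullet> i" "x \<bullet> i \<le> b \<bullet> i + t" using x i by (auto simp: mem_box inner_simps)
      have "a \<bullet> i < b \<bullet> i \<Longrightarrow> c \<bullet> i < b \<bullet> i"
      proof -
        assume "a \<bullet> i < b \<bullet> i"
        then have "l * (a \<bullet> i) < l * (b \<bullet> i)" using l by simp
        then show ?thesis using cc[OF i] by (simp add: algebra_simps)
      qed
      moreover have "b \<bullet> i + t < a \<bullet> i + s \<Longrightarrow> b \<bullet> i + t < (c + r *\<^sub>R One) \<bullet> i"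
      proof -
        assume "b \<bullet> i + t < a \<bullet> i + s"
        then have "l * (b \<bullet> i + t) < l * (a \<bullet> i + s)" using l by simp
        then show ?thesis using cc[OF i] by (simp add: algebra_simps)
      qed
      ultimately have "L i < x \<bullet> i \<and> x \<bullet> i < U i" using xi unfolding L_def U_def by auto }
    then show ?thesis unfolding V_def by auto
  qed
  moreover have "V \<inter> cbox a (a + s *\<^sub>R One) \<subseteq> Q'"
  proof
    fix y assume y: "y \<in> V \<inter> cbox a (a + s *\<^sub>R One)"
    { fix i :: 'a assume i: "i \<in> Basis"
      have yi: "a \<bullet> i \<le> y \<bullet> i" "y \<bullet> i \<le> a \<bullet> i + s" using y i by (auto simp: mem_box inner_simps)
      have LU: "L i < y \<bullet> i" "y \<bullet> i < U i" using y i unfolding V_def by auto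
      have "c \<bullet> i \<le> y \<bullet> i"
      proof (cases "a \<bullet> i < b \<bullet> i")
        case True then show ?thesis using LU unfolding L_def by auto
      next
        case False then have "a \<bullet> i = b \<bullet> i" using comp[OF i] by auto
        then show ?thesis using cc[OF i] yi by (simp add: algebra_simps)
      qed
      moreover have "y \<bullet> i \<le> (c + r *\<^sub>R One) \<bullet> i"
      proof (cases "b \<bullet> i + t < a \<bullet> i + s")
        case True then show ?thesis using LU unfolding U_def by auto
      next
        case False then have "b \<bullet> i + t = a \<bullet> i + s" using comp[OF i] by auto
        then show ?thesis using cc[OF i] yi by (simp add: algebra_simps)
      qed
      ultimately have "c \<bullet> i \<le> y \<bullet> i \<and> y \<bullet> i \<le> (c + r *\<^sub>R One) \<bullet> i" by simp }
    then show "y \<in> Q'" unfolding Q'_def by (simp add: mem_box)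
  qed
  ultimately show ?thesis using cube Q'P avg by blast
qed

lemma cube_sets: "is_cube Q \<Longrightarrow> Q \<in> sets lebesgue" "is_cube Q \<Longrightarrow> closed Q"
  unfolding is_cube_def by (auto simp: borel_closed)

lemma omega_sets: "\<Omega> = UNIV \<or> is_cube \<Omega> \<Longrightarrow> \<Omega> \<in> sets lebesgue"
  using cube_sets by auto

lemma maxfun_relopen:
  fixes \<Omega> :: "'a::euclidean_space set" and g :: "'a \<Rightarrow> real"
  assumes om: "\<Omega> = UNIV \<or> is_cube \<Omega>" and x: "x \<in> \<Omega>" and lt: "\<tau> < maxfun \<Omega> g x"
  shows "\<exists>V. open V \<and> x \<in> V \<and> (\<forall>y\<in>V \<inter> \<Omega>. \<tau> < maxfun \<Omega> g y)"
proof -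
  obtain Q where Q: "is_cube Q" "Q \<subseteq> \<Omega>" "x \<in> Q"
    and avg: "\<tau> < (\<integral>\<^sup>+ y. indicator Q y * ennreal \<bar>g y\<bar> \<partial>lebesgue) / emeasure lebesgue Q"
    using lt unfolding maxfun_def less_SUP_iff by blast
  obtain b t where bt: "0 < t" "Q = cbox b (b + t *\<^sub>R One)" using Q(1) unfolding is_cube_def by blast
  have xQ: "x \<in> cbox b (b + t *\<^sub>R One)" using Q(3) bt(2) by simp
  have avg': "\<tau> < (\<integral>\<^sup>+ y. indicator (cbox b (b + t *\<^sub>R One)) y * ennreal \<bar>g y\<bar> \<partial>lebesgue) / emeasure lebesgue (cbox b (b + t *\<^sub>R One))"
    using avg bt(2) by simp
  have up: "\<tau> < maxfun \<Omega> g y" if "is_cube Q'" "Q' \<subseteq> \<Omega>" "y \<in> Q'"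
      "\<tau> < (\<integral>\<^sup>+ y. indicator Q' y * ennreal \<bar>g y\<bar> \<partial>lebesgue) / emeasure lebesgue Q'" for Q' y
    unfolding maxfun_def less_SUP_iff using that by blast
  show ?thesis
  proof (cases "is_cube \<Omega>")
    case True
    then obtain a s where as: "0 < s" "\<Omega> = cbox a (a + s *\<^sub>R One)" unfolding is_cube_def by auto
    obtain Q' V where "is_cube Q'" "Q' \<subseteq> \<Omega>"
      "\<tau> < (\<integral>\<^sup>+ y. indicator Q' y * ennreal \<bar>g y\<bar> \<partial>lebesgue) / emeasure lebesgue Q'"
      "open V" "x \<in> V" "V \<inter> \<Omega> \<subseteq> Q'"
      using enlarge[OF bt(1) as(1) _ xQ avg'] Q(2) unfolding bt(2) as(2) by blast
    then show ?thesis using up by (meson IntI subsetD)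
  next
    case False
    then have U: "\<Omega> = UNIV" using om by auto
    define a where "a = b - One"
    have sub: "cbox b (b + t *\<^sub>R One) \<subseteq> cbox a (a + (t + 2) *\<^sub>R One)"
      unfolding a_def using bt by (auto simp: subset_box inner_simps)
    obtain Q' V where "is_cube Q'" 
      "\<tau> < (\<integral>\<^sup>+ y. indicator Q' y * ennreal \<bar>g y\<bar> \<partial>lebesgue) / emeasure lebesgue Q'"
      "open V" "x \<in> V" "V \<inter> cbox a (a + (t + 2) *\<^sub>R One) \<subseteq> Q'"
      using enlarge[OF bt(1) _ sub xQ avg'] bt(1) by auto
    moreover have "x \<in> box a (a + (t + 2) *\<^sub>R One)" using xQ bt(1) unfolding a_def
      by (auto simp: mem_box inner_simps)
    moreover have "box a (a + (t + 2) *\<^sub>R One) \<subseteq> cbox a (a + (t + 2) *\<^sub>R One)" by (rule box_subset_cbox)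
    ultimately show ?thesis using up[of Q'] U
      by (intro exI[of _ "V \<inter> box a (a + (t + 2) *\<^sub>R One)"]) auto
  qed
qed

lemma maxfun_measurable:
  fixes \<Omega> :: "'a::euclidean_space set" and g :: "'a \<Rightarrow> real"
  assumes om: "\<Omega> = UNIV \<or> is_cube \<Omega>"
  shows "maxfun \<Omega> g \<in> borel_measurable (lebesgue_on \<Omega>)"
proof (rule borel_measurableI_greater)
  fix \<tau> :: ennreal
  define S where "S = {x \<in> \<Omega>. \<tau> < maxfun \<Omega> g x}"
  have Seq: "S = \<Omega> \<inter> \<Union>{V. open V \<and> V \<inter> \<Omega> \<subseteq> S}"
  proof
    show "S \<subseteq> \<Omega> \<inter> \<Union>{V. open V \<and> V \<inter> \<Omega> \<subseteq> S}"
    proof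
      fix x assume xS: "x \<in> S"
      then have "x \<in> \<Omega>" "\<tau> < maxfun \<Omega> g x" unfolding S_def by auto
      then obtain V where V: "open V" "x \<in> V" "\<forall>y\<in>V \<inter> \<Omega>. \<tau> < maxfun \<Omega> g y"
        using maxfun_relopen[OF om] by metis
      have "V \<inter> \<Omega> \<subseteq> S" using V(3) unfolding S_def by auto
      then have "V \<in> {V. open V \<and> V \<inter> \<Omega> \<subseteq> S}" using V(1) by simp
      then show "x \<in> \<Omega> \<inter> \<Union>{V. open V \<and> V \<inter> \<Omega> \<subseteq> S}" using \<open>x \<in> \<Omega>\<close> V(2) by blast
    qed
    show "\<Omega> \<inter> \<Union>{V. open V \<and> V \<inter> \<Omega> \<subseteq> S} \<subseteq> S" by auto
  qed
  have Us: "\<Union>{V. open V \<and> V \<inter> \<Omega> \<subseteq> S} \<in> sets lebesgue"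
  proof -
    have "open (\<Union>{V. open V \<and> V \<inter> \<Omega> \<subseteq> S})" by (rule open_Union) simp
    then show ?thesis by (simp add: borel_open)
  qed
  have "S \<in> sets lebesgue" by (subst Seq) (rule sets.Int[OF omega_sets[OF om] Us])
  then show "{x \<in> space (lebesgue_on \<Omega>). \<tau> < maxfun \<Omega> g x} \<in> sets (lebesgue_on \<Omega>)"
  proof -
    have sp: "space (lebesgue_on \<Omega>) = \<Omega>" by (simp add: space_restrict_space)
    have om2: "\<Omega> \<inter> space lebesgue \<in> sets lebesgue" using omega_sets[OF om] by simp
    have "S \<in> sets (lebesgue_on \<Omega>)"
      using sets_restrict_space_iff[OF om2, of S] \<open>S \<in> sets lebesgue\<close> unfolding S_def by blast
    then show ?thesis unfolding sp S_def .
  qed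
qed


lemma meas_ind:
  fixes g :: "'a::euclidean_space \<Rightarrow> real"
  assumes g: "g \<in> borel_measurable (lebesgue_on \<Omega>)" and om: "\<Omega> \<in> sets lebesgue"
    and Q: "Q \<subseteq> \<Omega>" "Q \<in> sets lebesgue"
  shows "(\<lambda>y. indicator Q y * ennreal \<bar>g y\<bar>) \<in> borel_measurable lebesgue"
    and "(\<lambda>y. indicator Q y *\<^sub>R g y) \<in> borel_measurable lebesgue"
proof -
  have om2: "\<Omega> \<inter> space lebesgue \<in> sets lebesgue" using om by simp
  have h: "(\<lambda>x. indicator \<Omega> x *\<^sub>R g x) \<in> borel_measurable lebesgue"
    using borel_measurable_restrict_space_iff[OF om2] g by blast
  have m1: "(\<lambda>y. indicator Q y * ennreal \<bar>indicator \<Omega> y *\<^sub>R g y\<bar>) \<in> borel_measurable lebesgue"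
    using h Q(2) by measurable
  have m2: "(\<lambda>y. indicator Q y *\<^sub>R (indicator \<Omega> y *\<^sub>R g y)) \<in> borel_measurable lebesgue"
    using h Q(2) by measurable
  have e1: "(\<lambda>y. indicator Q y * ennreal \<bar>indicator \<Omega> y *\<^sub>R g y\<bar>) = (\<lambda>y. indicator Q y * ennreal \<bar>g y\<bar>)"
  proof (rule ext)
    fix y show "indicator Q y * ennreal \<bar>indicator \<Omega> y *\<^sub>R g y\<bar> = indicator Q y * ennreal \<bar>g y\<bar>"
      by (cases "y \<in> Q") (use Q(1) in auto)
  qed
  have e2: "(\<lambda>y. indicator Q y *\<^sub>R (indicator \<Omega> y *\<^sub>R g y)) = (\<lambda>y. indicator Q y *\<^sub>R g y)"
  proof (rule ext)
    fix y show "indicator Q y *\<^sub>R (indicator \<Omega> y *\<^sub>R g y) = indicator Q y *\<^sub>R g y"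
      by (cases "y \<in> Q") (use Q(1) in auto)
  qed
  show "(\<lambda>y. indicator Q y * ennreal \<bar>g y\<bar>) \<in> borel_measurable lebesgue" using m1 e1 by simp
  show "(\<lambda>y. indicator Q y *\<^sub>R g y) \<in> borel_measurable lebesgue" using m2 e2 by simp
qed

lemma A1_C:
  assumes "A1 \<Omega> w"
  shows "\<exists>C\<ge>0. AE x in lebesgue. x \<in> \<Omega> \<longrightarrow> maxfun \<Omega> w x \<le> ennreal (C * w x)"
proof -
  obtain C where C: "AE x in lebesgue. x \<in> \<Omega> \<longrightarrow> maxfun \<Omega> w x \<le> ennreal (C * w x)"
    using assms unfolding A1_def by blast
  have pos: "AE x in lebesgue. x \<in> \<Omega> \<longrightarrow> w x > 0" using assms unfolding A1_def weight_on_def by blast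
  have "AE x in lebesgue. x \<in> \<Omega> \<longrightarrow> maxfun \<Omega> w x \<le> ennreal (max C 0 * w x)"
    using C pos
  proof eventually_elim
    case (elim x)
    show ?case
    proof
      assume x: "x \<in> \<Omega>"
      have "C * w x \<le> max C 0 * w x" using elim x by (intro mult_right_mono) auto
      then show "maxfun \<Omega> w x \<le> ennreal (max C 0 * w x)" using elim x
        by (meson ennreal_leI order_trans)
    qed
  qed
  then show ?thesis by (intro exI[of _ "max C 0"]) auto
qed

lemma maxfun_mono:
  assumes "AE x in lebesgue. x \<in> \<Omega> \<longrightarrow> \<bar>f x\<bar> \<le> \<bar>g x\<bar>"
  shows "maxfun \<Omega> f x \<le> maxfun \<Omega> g x"
  unfolding maxfun_def
proof (rule SUP_mono)
  fix Q assume Q: "Q \<in> {Q. is_cube Q \<and> Q \<subseteq> \<Omega> \<and> x \<in> Q}"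
  have "(\<integral>\<^sup>+ y. indicator Q y * ennreal \<bar>f y\<bar> \<partial>lebesgue) \<le> (\<integral>\<^sup>+ y. indicator Q y * ennreal \<bar>g y\<bar> \<partial>lebesgue)"
    using assms
  proof (intro nn_integral_mono_AE, eventually_elim)
    case (elim y)
    then show ?case using Q by (cases "y \<in> Q") (auto intro: ennreal_leI)
  qed
  then show "\<exists>m\<in>{Q. is_cube Q \<and> Q \<subseteq> \<Omega> \<and> x \<in> Q}.
      (\<integral>\<^sup>+ y. indicator Q y * ennreal \<bar>f y\<bar> \<partial>lebesgue) / emeasure lebesgue Q
      \<le> (\<integral>\<^sup>+ y. indicator m y * ennreal \<bar>g y\<bar> \<partial>lebesgue) / emeasure lebesgue m"
    using Q by (intro bexI[of _ Q] divide_right_mono_ennreal)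
qed

lemma maxfun_cmult:
  fixes g :: "'a::euclidean_space \<Rightarrow> real"
  assumes g: "g \<in> borel_measurable (lebesgue_on \<Omega>)" and om: "\<Omega> \<in> sets lebesgue" and c: "c \<ge> 0"
  shows "maxfun \<Omega> (\<lambda>y. c * g y) x \<le> ennreal c * maxfun \<Omega> g x"
  unfolding maxfun_def SUP_mult_left_ennreal
proof (rule SUP_mono)
  fix Q assume Q: "Q \<in> {Q. is_cube Q \<and> Q \<subseteq> \<Omega> \<and> x \<in> Q}"
  then have Qs: "Q \<in> sets lebesgue" using cube_sets by blast
  have "(\<integral>\<^sup>+ y. indicator Q y * ennreal \<bar>c * g y\<bar> \<partial>lebesgue) = (\<integral>\<^sup>+ y. ennreal c * (indicator Q y * ennreal \<bar>g y\<bar>) \<partial>lebesgue)"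
    using c by (intro nn_integral_cong) (simp add: abs_mult ennreal_mult mult.left_commute)
  also have "\<dots> = ennreal c * (\<integral>\<^sup>+ y. indicator Q y * ennreal \<bar>g y\<bar> \<partial>lebesgue)"
    using meas_ind(1)[OF g om _ Qs] Q by (intro nn_integral_cmult) auto
  finally have "(\<integral>\<^sup>+ y. indicator Q y * ennreal \<bar>c * g y\<bar> \<partial>lebesgue) / emeasure lebesgue Q
      = ennreal c * ((\<integral>\<^sup>+ y. indicator Q y * ennreal \<bar>g y\<bar> \<partial>lebesgue) / emeasure lebesgue Q)"
    by (simp add: divide_ennreal_def mult.assoc)
  then show "\<exists>m\<in>{Q. is_cube Q \<and> Q \<subseteq> \<Omega> \<and> x \<in> Q}.
      (\<integral>\<^sup>+ y. indicator Q y * ennreal \<bar>c * g y\<bar> \<partial>lebesgue) / emeasure lebesgue Q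
      \<le> ennreal c * ((\<integral>\<^sup>+ y. indicator m y * ennreal \<bar>g y\<bar> \<partial>lebesgue) / emeasure lebesgue m)"
    using Q by (intro bexI[of _ Q]) auto
qed

lemma maxfun_add:
  fixes g f :: "'a::euclidean_space \<Rightarrow> real"
  assumes g: "g \<in> borel_measurable (lebesgue_on \<Omega>)" and f: "f \<in> borel_measurable (lebesgue_on \<Omega>)"
    and om: "\<Omega> \<in> sets lebesgue"
  shows "maxfun \<Omega> (\<lambda>y. g y + \<bar>f y\<bar>) x \<le> maxfun \<Omega> g x + maxfun \<Omega> f x"
  unfolding maxfun_def
proof (rule SUP_least)
  fix Q assume Q: "Q \<in> {Q. is_cube Q \<and> Q \<subseteq> \<Omega> \<and> x \<in> Q}"
  then have Qs: "Q \<in> sets lebesgue" using cube_sets by blast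
  have "(\<integral>\<^sup>+ y. indicator Q y * ennreal \<bar>g y + \<bar>f y\<bar>\<bar> \<partial>lebesgue) \<le> (\<integral>\<^sup>+ y. indicator Q y * ennreal \<bar>g y\<bar> + indicator Q y * ennreal \<bar>f y\<bar> \<partial>lebesgue)"
  proof (intro nn_integral_mono)
    fix y
    have "ennreal \<bar>g y + \<bar>f y\<bar>\<bar> \<le> ennreal (\<bar>g y\<bar> + \<bar>f y\<bar>)" by (intro ennreal_leI) auto
    also have "\<dots> = ennreal \<bar>g y\<bar> + ennreal \<bar>f y\<bar>" by (simp add: ennreal_plus)
    finally show "indicator Q y * ennreal \<bar>g y + \<bar>f y\<bar>\<bar> \<le> indicator Q y * ennreal \<bar>g y\<bar> + indicator Q y * ennreal \<bar>f y\<bar>"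
      by (cases "y \<in> Q") auto
  qed
  also have "\<dots> = (\<integral>\<^sup>+ y. indicator Q y * ennreal \<bar>g y\<bar> \<partial>lebesgue) + (\<integral>\<^sup>+ y. indicator Q y * ennreal \<bar>f y\<bar> \<partial>lebesgue)"
    using meas_ind(1)[OF g om _ Qs] meas_ind(1)[OF f om _ Qs] Q by (intro nn_integral_add) auto
  finally have "(\<integral>\<^sup>+ y. indicator Q y * ennreal \<bar>g y + \<bar>f y\<bar>\<bar> \<partial>lebesgue) / emeasure lebesgue Q \<le>
     (\<integral>\<^sup>+ y. indicator Q y * ennreal \<bar>g y\<bar> \<partial>lebesgue) / emeasure lebesgue Q + (\<integral>\<^sup>+ y. indicator Q y * ennreal \<bar>f y\<bar> \<partial>lebesgue) / emeasure lebesgue Q"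
    unfolding add_divide_distrib_ennreal[symmetric] by (rule divide_right_mono_ennreal)
  also have "\<dots> \<le> (SUP Q\<in>{Q. is_cube Q \<and> Q \<subseteq> \<Omega> \<and> x \<in> Q}. (\<integral>\<^sup>+ y. indicator Q y * ennreal \<bar>g y\<bar> \<partial>lebesgue) / emeasure lebesgue Q)
      + (SUP Q\<in>{Q. is_cube Q \<and> Q \<subseteq> \<Omega> \<and> x \<in> Q}. (\<integral>\<^sup>+ y. indicator Q y * ennreal \<bar>f y\<bar> \<partial>lebesgue) / emeasure lebesgue Q)"
    using Q by (intro add_mono SUP_upper)
  finally show "(\<integral>\<^sup>+ y. indicator Q y * ennreal \<bar>g y + \<bar>f y\<bar>\<bar> \<partial>lebesgue) / emeasure lebesgue Q \<le> 
      (SUP Q\<in>{Q. is_cube Q \<and> Q \<subseteq> \<Omega> \<and> x \<in> Q}. (\<integral>\<^sup>+ y. indicator Q y * ennreal \<bar>g y\<bar> \<partial>lebesgue) / emeasure lebesgue Q)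
      + (SUP Q\<in>{Q. is_cube Q \<and> Q \<subseteq> \<Omega> \<and> x \<in> Q}. (\<integral>\<^sup>+ y. indicator Q y * ennreal \<bar>f y\<bar> \<partial>lebesgue) / emeasure lebesgue Q)" .
qed


lemma cube_around_compact:
  fixes K :: "'a::euclidean_space set"
  assumes "compact K"
  shows "\<exists>Q. is_cube Q \<and> K \<subseteq> Q"
proof -
  have "bounded K" using assms by (rule compact_imp_bounded)
  then obtain e x where ex: "K \<subseteq> cball x e" "0 \<le> e" unfolding bounded_subset_cball by blast
  define R where "R = norm x + e + 1"
  have R: "R > 0" unfolding R_def using ex(2) by (simp add: add_nonneg_pos)
  have "K \<subseteq> cbox (- R *\<^sub>R One) (- R *\<^sub>R One + (2 * R) *\<^sub>R One)"
  proof
    fix y assume "y \<in> K"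
    then have "dist x y \<le> e" using ex by auto
    then have ny: "norm y \<le> norm x + e" using norm_triangle_ineq2[of y x] by (simp add: dist_norm norm_minus_commute)
    { fix i :: 'a assume i: "i \<in> Basis"
      have "\<bar>y \<bullet> i\<bar> \<le> norm y" using Basis_le_norm[OF i] .
      then have "- R \<le> y \<bullet> i \<and> y \<bullet> i \<le> R" using ny unfolding R_def by auto }
    then show "y \<in> cbox (- R *\<^sub>R One) (- R *\<^sub>R One + (2 * R) *\<^sub>R One)"
      by (auto simp: mem_box inner_simps)
  qed
  moreover have "is_cube (cbox (- R *\<^sub>R One) (- R *\<^sub>R One + (2 * R) *\<^sub>R One))"
    unfolding is_cube_def using R by (intro exI[of _ "- R *\<^sub>R One"] exI[of _ "2 * R"]) auto
  ultimately show ?thesis by blast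
qed

lemma loc_int:
  fixes f :: "'a::euclidean_space \<Rightarrow> real"
  assumes om: "\<Omega> = UNIV \<or> is_cube \<Omega>" and f: "f \<in> borel_measurable (lebesgue_on \<Omega>)"
    and ae: "AE x in lebesgue. x \<in> \<Omega> \<longrightarrow> maxfun \<Omega> f x \<le> ennreal (w x)"
    and K: "compact K" "K \<subseteq> \<Omega>"
  shows "set_integrable lebesgue K f"
proof -
  obtain Q where Q: "is_cube Q" "K \<subseteq> Q" "Q \<subseteq> \<Omega>"
  proof (cases "is_cube \<Omega>")
    case True then show ?thesis using that K by blast
  next
    case False then have "\<Omega> = UNIV" using om by blast
    then show ?thesis using that cube_around_compact[OF K(1)] by blast
  qed
  obtain b t where bt: "0 < t" "Q = cbox b (b + t *\<^sub>R One)" using Q(1) unfolding is_cube_def by blast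
  have Qs: "Q \<in> sets lebesgue" using cube_sets(1)[OF Q(1)] .
  have oms: "\<Omega> \<in> sets lebesgue" using omega_sets[OF om] .
  have em: "emeasure lebesgue Q = ennreal (t ^ DIM('a))" unfolding bt(2)
    by (rule cube_emeasure) (use bt in linarith)
  have tpos: "0 < t ^ DIM('a)" using bt by simp
  obtain x where x: "x \<in> Q" "maxfun \<Omega> f x \<le> ennreal (w x)"
  proof (rule ccontr)
    assume "\<not> thesis"
    then have nx: "\<And>x. x \<in> Q \<Longrightarrow> \<not> maxfun \<Omega> f x \<le> ennreal (w x)" using that by blast
    have "AE x in lebesgue. x \<notin> Q" using ae
    proof eventually_elim
      case (elim x) then show ?case using nx Q(3) by blast
    qed
    then have "Q \<in> null_sets lebesgue" using AE_iff_null_sets[OF Qs] by blast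
    then have "emeasure lebesgue Q = 0" by auto
    then have "ennreal (t ^ DIM('a)) = 0" using em by metis
    then have "t ^ DIM('a) \<le> 0" by (simp only: ennreal_eq_0_iff)
    then show False using tpos by linarith
  qed
  define I where "I = (\<integral>\<^sup>+ y. indicator Q y * ennreal \<bar>f y\<bar> \<partial>lebesgue)"
  have "I / emeasure lebesgue Q \<le> maxfun \<Omega> f x"
    unfolding maxfun_def I_def using Q x(1) by (intro SUP_upper) auto
  also have "\<dots> < top" using x(2) by (simp add: order_le_less_trans)
  finally have lt: "I / ennreal (t ^ DIM('a)) < top" unfolding em .
  have Ifin: "I < top"
  proof (rule ccontr)
    assume "\<not> I < top"
    then have "I = top" by (metis less_top)
    then have "I / ennreal (t ^ DIM('a)) = top" using tpos by (simp add: ennreal_divide_top divide_ennreal_def)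
    then show False using lt by (metis less_irrefl)
  qed
  have meas: "(\<lambda>y. indicator Q y *\<^sub>R f y) \<in> borel_measurable lebesgue"
    using meas_ind(2)[OF f oms Q(3) Qs] .
  have "(\<integral>\<^sup>+ y. ennreal (norm (indicator Q y *\<^sub>R f y)) \<partial>lebesgue) = I"
    unfolding I_def
  proof (intro nn_integral_cong)
    fix y show "ennreal (norm (indicator Q y *\<^sub>R f y)) = indicator Q y * ennreal \<bar>f y\<bar>"
      by (cases "y \<in> Q") auto
  qed
  then have "integrable lebesgue (\<lambda>y. indicator Q y *\<^sub>R f y)"
    using Ifin meas by (intro integrableI_bounded) (simp_all add: I_def)
  then have "set_integrable lebesgue Q f" unfolding set_integrable_def .
  moreover have "K \<in> sets lebesgue" using K(1) by (simp add: borel_closed compact_imp_closed)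
  ultimately show ?thesis using K(2) Q(2) set_integrable_subset by blast
qed


theorem mainTheorem14:
  fixes \<Omega> :: "'a::euclidean_space set" and f :: "'a \<Rightarrow> real"
  assumes "\<Omega> = UNIV \<or> is_cube \<Omega>"
    and "f \<in> borel_measurable (lebesgue_on \<Omega>)"
  shows "M_A1 \<Omega> f \<longleftrightarrow> M_A1_enn \<Omega> (maxfun \<Omega> f)"
proof
  note om = assms(1) and f = assms(2)
  have oms: "\<Omega> \<in> sets lebesgue" using omega_sets[OF om] .
  assume "M_A1 \<Omega> f"
  then obtain w where w: "A1 \<Omega> w" and fw: "AE x in lebesgue. x \<in> \<Omega> \<longrightarrow> \<bar>f x\<bar> \<le> w x"
    unfolding M_A1_def by blast
  obtain C where C: "C \<ge> 0" "AE x in lebesgue. x \<in> \<Omega> \<longrightarrow> maxfun \<Omega> w x \<le> ennreal (C * w x)"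
    using A1_C[OF w] by blast
  have ww: "weight_on \<Omega> w" using w unfolding A1_def by blast
  have wm: "w \<in> borel_measurable (lebesgue_on \<Omega>)" and wpos: "AE x in lebesgue. x \<in> \<Omega> \<longrightarrow> w x > 0"
    and wint: "\<And>K. compact K \<Longrightarrow> K \<subseteq> \<Omega> \<Longrightarrow> set_integrable lebesgue K w"
    using ww unfolding weight_on_def by blast+
  define C' where "C' = C + 1"
  have C': "C' > 0" unfolding C'_def using C by simp
  define w' where "w' x = C' * w x" for x
  have w'm: "w' \<in> borel_measurable (lebesgue_on \<Omega>)" unfolding w'_def using wm by measurable
  have "weight_on \<Omega> w'"
    unfolding weight_on_def
  proof (intro conjI allI impI)
    show "w' \<in> borel_measurable (lebesgue_on \<Omega>)" by (rule w'm)
    show "AE x in lebesgue. x \<in> \<Omega> \<longrightarrow> 0 < w' x" using wpos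
      by eventually_elim (use C' in \<open>auto simp: w'_def\<close>)
    fix K assume "compact K \<and> K \<subseteq> \<Omega>"
    then show "set_integrable lebesgue K w'" unfolding w'_def using wint by auto
  qed
  moreover have "AE x in lebesgue. x \<in> \<Omega> \<longrightarrow> maxfun \<Omega> w' x \<le> ennreal (C * w' x)"
    using C(2) wpos
  proof eventually_elim
    case (elim x)
    show ?case
    proof
      assume x: "x \<in> \<Omega>"
      have "maxfun \<Omega> w' x \<le> ennreal C' * maxfun \<Omega> w x"
        unfolding w'_def using maxfun_cmult[OF wm oms] C' by simp
      also have "\<dots> \<le> ennreal C' * ennreal (C * w x)" using elim x by (intro mult_left_mono) auto
      also have "\<dots> = ennreal (C * w' x)" using C' C elim x
        by (simp add: w'_def ennreal_mult[symmetric] mult.left_commute)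
      finally show "maxfun \<Omega> w' x \<le> ennreal (C * w' x)" .
    qed
  qed
  ultimately have Aw': "A1 \<Omega> w'" unfolding A1_def by blast
  have "AE x in lebesgue. x \<in> \<Omega> \<longrightarrow> maxfun \<Omega> f x \<le> ennreal (w' x)"
    using C(2) wpos
  proof eventually_elim
    case (elim x)
    show ?case
    proof
      assume x: "x \<in> \<Omega>"
      have "AE x in lebesgue. x \<in> \<Omega> \<longrightarrow> \<bar>f x\<bar> \<le> \<bar>w x\<bar>" using fw by eventually_elim auto
      then have "maxfun \<Omega> f x \<le> maxfun \<Omega> w x" by (rule maxfun_mono)
      also have "\<dots> \<le> ennreal (C * w x)" using elim x by auto
      also have "\<dots> \<le> ennreal (w' x)" unfolding w'_def C'_def using elim x
        by (intro ennreal_leI) (simp add: algebra_simps)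
      finally show "maxfun \<Omega> f x \<le> ennreal (w' x)" .
    qed
  qed
  then show "M_A1_enn \<Omega> (maxfun \<Omega> f)"
    unfolding M_A1_enn_def using maxfun_measurable[OF om] Aw' by blast
next
  note om = assms(1) and f = assms(2)
  have oms: "\<Omega> \<in> sets lebesgue" using omega_sets[OF om] .
  assume "M_A1_enn \<Omega> (maxfun \<Omega> f)"
  then obtain w where w: "A1 \<Omega> w" and fw: "AE x in lebesgue. x \<in> \<Omega> \<longrightarrow> maxfun \<Omega> f x \<le> ennreal (w x)"
    unfolding M_A1_enn_def by blast
  obtain C where C: "C \<ge> 0" "AE x in lebesgue. x \<in> \<Omega> \<longrightarrow> maxfun \<Omega> w x \<le> ennreal (C * w x)"
    using A1_C[OF w] by blast
  have ww: "weight_on \<Omega> w" using w unfolding A1_def by blast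
  have wm: "w \<in> borel_measurable (lebesgue_on \<Omega>)" and wpos: "AE x in lebesgue. x \<in> \<Omega> \<longrightarrow> w x > 0"
    and wint: "\<And>K. compact K \<Longrightarrow> K \<subseteq> \<Omega> \<Longrightarrow> set_integrable lebesgue K w"
    using ww unfolding weight_on_def by blast+
  define w' where "w' x = w x + \<bar>f x\<bar>" for x
  have w'm: "w' \<in> borel_measurable (lebesgue_on \<Omega>)" unfolding w'_def using wm f by measurable
  have "weight_on \<Omega> w'"
    unfolding weight_on_def
  proof (intro conjI allI impI)
    show "w' \<in> borel_measurable (lebesgue_on \<Omega>)" by (rule w'm)
    show "AE x in lebesgue. x \<in> \<Omega> \<longrightarrow> 0 < w' x" using wpos
      by eventually_elim (auto simp: w'_def add_pos_nonneg)
    fix K assume K: "compact K \<and> K \<subseteq> \<Omega>"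
    then have "set_integrable lebesgue K f" using loc_int[OF om f fw, of K] by simp
    then have "set_integrable lebesgue K (\<lambda>x. \<bar>f x\<bar>)" by (rule set_integrable_abs)
    moreover have "set_integrable lebesgue K w" using wint K by simp
    ultimately show "set_integrable lebesgue K w'" unfolding w'_def by (intro set_integral_add(1))
  qed
  moreover have "AE x in lebesgue. x \<in> \<Omega> \<longrightarrow> maxfun \<Omega> w' x \<le> ennreal ((C + 1) * w' x)"
    using C(2) wpos fw
  proof eventually_elim
    case (elim x)
    show ?case
    proof
      assume x: "x \<in> \<Omega>"
      have "maxfun \<Omega> w' x \<le> maxfun \<Omega> w x + maxfun \<Omega> f x"
        unfolding w'_def using maxfun_add[OF wm f oms] .
      also have "\<dots> \<le> ennreal (C * w x) + ennreal (w x)" using elim x by (intro add_mono) auto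
      also have "\<dots> = ennreal ((C + 1) * w x)"
      proof -
        have "0 \<le> C * w x" "0 \<le> w x" using C elim x by auto
        then have "ennreal (C * w x) + ennreal (w x) = ennreal (C * w x + w x)" by (rule ennreal_plus[symmetric])
        also have "C * w x + w x = (C + 1) * w x" by (simp add: algebra_simps)
        finally show ?thesis .
      qed
      also have "\<dots> \<le> ennreal ((C + 1) * w' x)" unfolding w'_def using C
        by (intro ennreal_leI mult_left_mono) auto
      finally show "maxfun \<Omega> w' x \<le> ennreal ((C + 1) * w' x)" .
    qed
  qed
  ultimately have Aw': "A1 \<Omega> w'" unfolding A1_def by blast
  have "AE x in lebesgue. x \<in> \<Omega> \<longrightarrow> \<bar>f x\<bar> \<le> w' x"
    using wpos by eventually_elim (auto simp: w'_def)
  then show "M_A1 \<Omega> f" unfolding M_A1_def using f Aw' by blast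
qed

end
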